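(* Consider the planar random motion $(X(t),Y(t))$ defined in the context, driven by a homogeneous Poisson process $N(t)$ of rate $\lambda>0$ with speed $c>0$. For $t>0$, conditionally on the event $\{N(t)\text{ is even}\}$, the law of $(X(t),Y(t))$ restricted to the open disk $\{x^2+y^2<c^2t^2\}$ has density $$\frac{\lambda}{2\pi c}\,\frac{1}{\cosh(\lambda t)}\,\frac{\sinh\left(\frac{\lambda}{c}\sqrt{c^2t^2-(x^2+y^2)}\right)}{\sqrt{c^2t^2-(x^2+y^2)}},$$ whose integral over the disk equals $1-\frac{1}{\cosh(\lambda t)}$; the remaining mass $\frac{1}{\cosh(\lambda t)}$ lies on the circle $x^2+y^2=c^2t^2$.
   Context: The planar random motion: a particle starts at the origin and moves at constant speed $c$ in a direction uniformly distributed on $[0,2\pi)$; at each event of $N(t)$ it takes a new direction, uniform on $[0,2\pi)$ and independent of everything else. It is known (Kolesnik–Orsingher) that for every $n\ge1$, conditionally on $N(t)=n$, $(X(t),Y(t))$ has density $\frac{n}{2\pi(ct)^n}\,[c^2t^2-(x^2+y^2)]^{\frac n2-1}$ on the open disk $x^2+y^2<c^2t^2$, while conditionally on $N(t)=0$ it lies on the circle $x^2+y^2=c^2t^2$. *)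

theory Defs
  imports "HOL-Probability.Probability"
begin

definition open_disk :: "real \<Rightarrow> real \<Rightarrow> (real \<times> real) set" where
  "open_disk c t = {p. (fst p)\<^sup>2 + (snd p)\<^sup>2 < (c * t)\<^sup>2}"

definition circle :: "real \<Rightarrow> real \<Rightarrow> (real \<times> real) set" where
  "circle c t = {p. (fst p)\<^sup>2 + (snd p)\<^sup>2 = (c * t)\<^sup>2}"

text \<open>Kolesnik--Orsingher conditional density given N(t) = n (n \<ge> 1), on the open disk.\<close>
definition ko_density :: "nat \<Rightarrow> real \<Rightarrow> real \<Rightarrow> real \<times> real \<Rightarrow> real" where
  "ko_density n c t p =
     real n / (2 * pi * (c * t) ^ n) *
     ((c * t)\<^sup>2 - ((fst p)\<^sup>2 + (snd p)\<^sup>2)) powr (real n / 2 - 1)"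

definition even_density :: "real \<Rightarrow> real \<Rightarrow> real \<Rightarrow> real \<times> real \<Rightarrow> real" where
  "even_density l c t p =
     l / (2 * pi * c) * (1 / cosh (l * t)) *
     (sinh (l / c * sqrt ((c * t)\<^sup>2 - ((fst p)\<^sup>2 + (snd p)\<^sup>2))) /
      sqrt ((c * t)\<^sup>2 - ((fst p)\<^sup>2 + (snd p)\<^sup>2)))"

end

theory Submission
  imports Defs
begin
lemma alg:
  fixes e h F c r N CT Q R l :: real
  assumes "e>0" "h>0" "F>0" "c>0" "r>0" "N>0" "CT>0"
  shows "e*(Q*(l/c)*CT)/(N*F)/(e*h) * (N/(2*pi*CT) * R) = l/(2*pi*c*h*r) * (Q*(r*R)/F)"
  using assms by (simp add: field_simps)

lemma pointwise:
  fixes l c t :: real and p :: "real \<times> real"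
  assumes l: "l > 0" and c: "c > 0" and t: "t > 0" and pD: "p \<in> open_disk c t"
  shows "(\<lambda>n. (if even n \<and> 1 \<le> n then exp(-l*t)*(l*t)^n/fact n else 0) / (exp(-l*t)*cosh(l*t))
            * ko_density n c t p) sums even_density l c t p"
proof -
  define w where "w = (c * t)\<^sup>2 - ((fst p)\<^sup>2 + (snd p)\<^sup>2)"
  have w: "w > 0" using pD by (simp add: open_disk_def w_def)
  define r where "r = sqrt w"
  have r: "r > 0" "r^2 = w" using w by (auto simp: r_def)
  define x where "x = l / c * r"
  define K where "K = l / (2*pi*c*cosh(l*t)*r)"
  define f where "f = (\<lambda>n. (if even n \<and> 1 \<le> n then exp(-l*t)*(l*t)^n/fact n else 0) / (exp(-l*t)*cosh(l*t))
            * ko_density n c t p)"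
  have ch: "cosh (l*t) > 0" by (simp add: cosh_real_pos)
  have key: "f (Suc m) = K * (if even m then 0 else x ^ m /\<^sub>R fact m)" for m
  proof (cases "even m")
    case True then show ?thesis by (simp add: f_def)
  next
    case False
    then obtain i where m: "m = 2*i+1" using oddE by blast
    have e: "real (Suc m) / 2 - 1 = real i" using m by (simp add: field_simps)
    have pw: "w powr real i = r^(2*i)" using w r by (simp add: powr_realpow power_mult)
    have "f (Suc m) = exp(-l*t)*(l*t)^(2*i+2)/fact (2*i+2) / (exp(-l*t)*cosh(l*t)) *
          (real (2*i+2) / (2*pi*(c*t)^(2*i+2)) * r^(2*i))"
      unfolding f_def ko_density_def using m e pw by (simp add: w_def[symmetric])
    also have "\<dots> = K * (x ^ m /\<^sub>R fact m)"
    proof -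
      have f2: "(fact (2*i+2)::real) = real (2*i+2) * fact (2*i+1)"
        using fact_Suc[of "2*i+1"] by (simp add: algebra_simps)
      have lt: "(l*t)^(2*i+2) = ((l/c)^(2*i+1) * (l/c)) * (c*t)^(2*i+2)"
        using t c by (simp add: power_mult_distrib power_divide)
      have xm: "x^m = (l/c)^(2*i+1) * (r * r^(2*i))" unfolding x_def m
        by (metis power_mult_distrib power_Suc mult.commute mult.left_commute add.commute plus_1_eq_Suc)
      have h2: "x ^ m /\<^sub>R fact m = (l/c)^(2*i+1) * (r * r^(2*i)) / fact (2*i+1)"
        by (subst xm) (simp add: m divide_inverse mult.commute)
      show ?thesis unfolding h2 f2 K_def unfolding lt
        by (rule alg) (use c t r ch in auto)
    qed
    finally show ?thesis using False by simp
  qed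
  have "(\<lambda>m. f (Suc m)) sums (K * sinh x)"
    unfolding key by (intro sums_mult sinh_converges)
  hence "f sums (K * sinh x + f 0)" by (simp add: sums_Suc_iff)
  moreover have "f 0 = 0" by (simp add: f_def)
  moreover have "K * sinh x = even_density l c t p"
    unfolding even_density_def K_def x_def r_def w_def by simp
  ultimately show ?thesis unfolding f_def by simp
qed


lemma q_meas: "(\<lambda>p::real\<times>real. (c * t)\<^sup>2 - ((fst p)\<^sup>2 + (snd p)\<^sup>2)) \<in> borel_measurable borel"
  by (intro borel_measurable_continuous_onI continuous_intros)

lemma ko_meas[measurable]: "(\<lambda>p. ko_density n c t p) \<in> borel_measurable borel"
proof -
  have "(\<lambda>x::real. real n / (2 * pi * (c * t) ^ n) * x powr (real n / 2 - 1)) \<in> borel_measurable borel"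
    by measurable
  from measurable_compose[OF q_meas this] show ?thesis unfolding ko_density_def by simp
qed

lemma ed_meas[measurable]: "(\<lambda>p. even_density l c t p) \<in> borel_measurable borel"
proof -
  have s: "(\<lambda>x::real. sinh (l / c * sqrt x)) \<in> borel_measurable borel"
    by (intro borel_measurable_continuous_onI continuous_intros)
  have "(\<lambda>x::real. l / (2 * pi * c) * (1 / cosh (l * t)) * (sinh (l / c * sqrt x) / sqrt x)) \<in> borel_measurable borel"
    using s by measurable
  from measurable_compose[OF q_meas this] show ?thesis unfolding even_density_def by simp
qed

lemma D_sets[measurable]: "open_disk c t \<in> sets borel"
proof -
  have "open {p::real\<times>real. (fst p)\<^sup>2 + (snd p)\<^sup>2 < (c * t)\<^sup>2}"
    by (intro open_Collect_less continuous_intros)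
  thus ?thesis unfolding open_disk_def by (rule borel_open)
qed

lemma C_sets[measurable]: "circle c t \<in> sets borel"
proof -
  have "closed {p::real\<times>real. (fst p)\<^sup>2 + (snd p)\<^sup>2 = (c * t)\<^sup>2}"
    by (intro closed_Collect_eq continuous_intros)
  thus ?thesis unfolding circle_def by (rule borel_closed)
qed

lemma ko_nonneg: "ko_density n c t p \<ge> 0" if "c > 0" "t > 0"
  unfolding ko_density_def using that by simp

lemma ed_nonneg: "even_density l c t p \<ge> 0" if "l > 0" "c > 0" "t > 0" "p \<in> open_disk c t"
proof -
  have w: "(c * t)\<^sup>2 - ((fst p)\<^sup>2 + (snd p)\<^sup>2) > 0" using that by (simp add: open_disk_def)
  show ?thesis unfolding even_density_def using that w
    by (intro mult_nonneg_nonneg divide_nonneg_nonneg) (auto simp: cosh_real_pos intro: less_imp_le)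
qed

lemma DC_disj: "open_disk c t \<inter> circle c t = {}"
  by (auto simp: open_disk_def circle_def)

theorem theorem5p4:
  fixes M :: "'w measure" and N :: "'w \<Rightarrow> nat" and P :: "'w \<Rightarrow> real \<times> real"
    and l c t :: real
  assumes "prob_space M"
    and l_pos: "l > 0" and c_pos: "c > 0" and t_pos: "t > 0"
    and N_meas: "N \<in> measurable M (count_space UNIV)"
    and P_meas: "P \<in> borel_measurable M"
    and poisson: "\<And>n. measure M {\<omega> \<in> space M. N \<omega> = n} = exp (- l * t) * (l * t) ^ n / fact n"
    and cond_dens: "\<And>n A. n \<ge> 1 \<Longrightarrow> A \<in> sets borel \<Longrightarrow>
        emeasure M {\<omega> \<in> space M. N \<omega> = n \<and> P \<omega> \<in> A} =
        emeasure M {\<omega> \<in> space M. N \<omega> = n} *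
        (\<integral>\<^sup>+ p \<in> A \<inter> open_disk c t. ennreal (ko_density n c t p) \<partial>lborel)"
    and cond_zero: "emeasure M {\<omega> \<in> space M. N \<omega> = 0 \<and> P \<omega> \<notin> circle c t} = 0"
  shows "set_integrable lborel (open_disk c t) (even_density l c t)
       \<and> (\<forall>A \<in> sets borel.
            cond_prob M (\<lambda>\<omega>. P \<omega> \<in> A \<inter> open_disk c t) (\<lambda>\<omega>. even (N \<omega>))
            = (LINT p : A \<inter> open_disk c t | lborel. even_density l c t p))
       \<and> (LINT p : open_disk c t | lborel. even_density l c t p) = 1 - 1 / cosh (l * t)
       \<and> cond_prob M (\<lambda>\<omega>. P \<omega> \<in> circle c t) (\<lambda>\<omega>. even (N \<omega>)) = 1 / cosh (l * t)"
proof -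
  interpret prob_space M by fact
  define D where "D = open_disk c t"
  define C where "C = circle c t"
  define pn where "pn = (\<lambda>n::nat. exp(-l*t)*(l*t)^n/fact n)"
  define E where "E = exp(-l*t)*cosh(l*t)"
  define a where "a = (\<lambda>n::nat. if even n \<and> 1 \<le> n then pn n else 0)"
  have pn_pos: "pn n > 0" for n unfolding pn_def using l_pos t_pos by simp
  have E_pos: "E > 0" unfolding E_def by (simp add: cosh_real_pos)
  have a_nn: "a n \<ge> 0" for n unfolding a_def using pn_pos[of n] by simp
  have [measurable]: "D \<in> sets borel" "C \<in> sets borel" unfolding D_def C_def by measurable
  have DC: "D \<inter> C = {}" unfolding D_def C_def by (rule DC_disj)
  have em_N: "emeasure M {\<omega>\<in>space M. N \<omega> = n} = ennreal (pn n)" for n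
    using poisson[of n] by (simp add: emeasure_eq_measure pn_def)
  have Nset[measurable]: "{\<omega>\<in>space M. N \<omega> = n \<and> P \<omega> \<in> B \<and> Q} \<in> sets M"
    if "B \<in> sets borel" for n B Q
    using that N_meas P_meas by measurable
  have sumlem: "emeasure M {\<omega>\<in>space M. P \<omega> \<in> B \<and> even (N \<omega>)} =
      (\<Sum>n. emeasure M {\<omega>\<in>space M. N \<omega> = n \<and> P \<omega> \<in> B \<and> even n})"
    if B: "B \<in> sets borel" for B
  proof -
    have "(\<Sum>n. emeasure M {\<omega>\<in>space M. N \<omega> = n \<and> P \<omega> \<in> B \<and> even n}) =
        emeasure M (\<Union>n. {\<omega>\<in>space M. N \<omega> = n \<and> P \<omega> \<in> B \<and> even n})"
      by (rule suminf_emeasure) (use B Nset in \<open>auto simp: disjoint_family_on_def\<close>)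
    also have "(\<Union>n. {\<omega>\<in>space M. N \<omega> = n \<and> P \<omega> \<in> B \<and> even n}) = {\<omega>\<in>space M. P \<omega> \<in> B \<and> even (N \<omega>)}"
      by auto
    finally show ?thesis by simp
  qed
  have ko_one: "(\<integral>\<^sup>+ p \<in> D. ennreal (ko_density n c t p) \<partial>lborel) = 1" if n: "n \<ge> 1" for n
  proof -
    have "emeasure M {\<omega>\<in>space M. N \<omega> = n \<and> P \<omega> \<in> UNIV} = emeasure M {\<omega>\<in>space M. N \<omega> = n} *
        (\<integral>\<^sup>+ p \<in> UNIV \<inter> D. ennreal (ko_density n c t p) \<partial>lborel)"
      using cond_dens[OF n, of UNIV] unfolding D_def by simp
    hence "ennreal (pn n) * 1 = ennreal (pn n) * (\<integral>\<^sup>+ p \<in> D. ennreal (ko_density n c t p) \<partial>lborel)"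
      using em_N[of n] by simp
    thus ?thesis using pn_pos[of n] by (subst (asm) ennreal_mult_cancel_left) auto
  qed
  have emS: "emeasure M {\<omega>\<in>space M. P \<omega> \<in> S \<and> even (N \<omega>)} =
      (\<Sum>n. ennreal (a n) * (\<integral>\<^sup>+ p \<in> S. ennreal (ko_density n c t p) \<partial>lborel))"
    if S: "S \<in> sets borel" "S \<subseteq> D" for S
  proof -
    have "emeasure M {\<omega>\<in>space M. N \<omega> = n \<and> P \<omega> \<in> S \<and> even n} =
        ennreal (a n) * (\<integral>\<^sup>+ p \<in> S. ennreal (ko_density n c t p) \<partial>lborel)" for n
    proof (cases "n = 0")
      case True
      have "emeasure M {\<omega>\<in>space M. N \<omega> = n \<and> P \<omega> \<in> S \<and> even n} \<le>
          emeasure M {\<omega> \<in> space M. N \<omega> = 0 \<and> P \<omega> \<notin> circle c t}"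
        by (rule emeasure_mono) (use True S DC N_meas P_meas in \<open>auto simp: C_def\<close>)
      thus ?thesis using True cond_zero by (simp add: a_def)
    next
      case False
      show ?thesis
      proof (cases "even n")
        case False thus ?thesis by (simp add: a_def)
      next
        case True
        have "emeasure M {\<omega>\<in>space M. N \<omega> = n \<and> P \<omega> \<in> S \<and> even n} =
            emeasure M {\<omega>\<in>space M. N \<omega> = n \<and> P \<omega> \<in> S}" using True by simp
        also have "\<dots> = ennreal (pn n) * (\<integral>\<^sup>+ p \<in> S \<inter> D. ennreal (ko_density n c t p) \<partial>lborel)"
          using cond_dens[of n S] \<open>n \<noteq> 0\<close> S em_N[of n] by (simp add: D_def)
        also have "S \<inter> D = S" using S by auto
        finally show ?thesis using True \<open>n \<noteq> 0\<close> by (simp add: a_def)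
      qed
    qed
    thus ?thesis using sumlem[OF S(1)] by simp
  qed
  have intS: "(\<integral>\<^sup>+ p \<in> S. ennreal (even_density l c t p) \<partial>lborel) =
      ennreal (1/E) * emeasure M {\<omega>\<in>space M. P \<omega> \<in> S \<and> even (N \<omega>)}"
    if S: "S \<in> sets borel" "S \<subseteq> D" for S
  proof -
    have pw: "ennreal (even_density l c t p) * indicator S p =
        (\<Sum>n. ennreal (a n / E * ko_density n c t p) * indicator S p)" for p
    proof (cases "p \<in> S")
      case True
      hence pD: "p \<in> open_disk c t" using S D_def by auto
      have "(\<Sum>n. ennreal (a n / E * ko_density n c t p)) = ennreal (even_density l c t p)"
      proof (rule suminf_ennreal_eq)
        show "(\<lambda>n. a n / E * ko_density n c t p) sums even_density l c t p"
          using pointwise[OF l_pos c_pos t_pos pD] unfolding a_def pn_def E_def .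
      qed (use a_nn E_pos ko_nonneg[OF c_pos t_pos] in auto)
      thus ?thesis using True by simp
    qed simp
    have "(\<integral>\<^sup>+ p \<in> S. ennreal (even_density l c t p) \<partial>lborel) =
        (\<integral>\<^sup>+ p. (\<Sum>n. ennreal (a n / E * ko_density n c t p) * indicator S p) \<partial>lborel)"
      by (simp add: pw)
    also have "\<dots> = (\<Sum>n. \<integral>\<^sup>+ p. ennreal (a n / E * ko_density n c t p) * indicator S p \<partial>lborel)"
      by (rule nn_integral_suminf) (use S in measurable)
    also have "\<dots> = (\<Sum>n. ennreal (1/E) * (ennreal (a n) * (\<integral>\<^sup>+ p \<in> S. ennreal (ko_density n c t p) \<partial>lborel)))"
    proof (intro suminf_cong)
      fix n
      have "(\<lambda>p. ennreal (a n / E * ko_density n c t p) * indicator S p) =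
          (\<lambda>p. ennreal (1/E * a n) * (ennreal (ko_density n c t p) * indicator S p))"
      proof
        fix p
        have "a n / E * ko_density n c t p = (1/E * a n) * ko_density n c t p" by simp
        also have "ennreal \<dots> = ennreal (1/E * a n) * ennreal (ko_density n c t p)"
          using a_nn[of n] E_pos ko_nonneg[OF c_pos t_pos] by (intro ennreal_mult) auto
        finally have "ennreal (a n / E * ko_density n c t p) = ennreal (1/E * a n) * ennreal (ko_density n c t p)" .
        thus "ennreal (a n / E * ko_density n c t p) * indicator S p =
          ennreal (1/E * a n) * (ennreal (ko_density n c t p) * indicator S p)" by (simp add: mult.assoc)
      qed
      moreover have "ennreal (1/E * a n) = ennreal (1/E) * ennreal (a n)"
        using a_nn[of n] E_pos by (intro ennreal_mult) auto
      ultimately show "(\<integral>\<^sup>+ p. ennreal (a n / E * ko_density n c t p) * indicator S p \<partial>lborel) =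
          ennreal (1/E) * (ennreal (a n) * (\<integral>\<^sup>+ p \<in> S. ennreal (ko_density n c t p) \<partial>lborel))"
        using S by (simp add: nn_integral_cmult mult.assoc)
    qed
    also have "\<dots> = ennreal (1/E) * emeasure M {\<omega>\<in>space M. P \<omega> \<in> S \<and> even (N \<omega>)}"
      using emS[OF S] by simp
    finally show ?thesis .
  qed
  have evsums: "(\<lambda>n. if even n then pn n else 0) sums E"
  proof -
    have "(\<lambda>n. exp(-l*t) * (if even n then (l*t) ^ n /\<^sub>R fact n else 0)) sums (exp(-l*t) * cosh (l*t))"
      by (rule sums_mult[OF cosh_converges])
    moreover have "(\<lambda>n. exp(-l*t) * (if even n then (l*t) ^ n /\<^sub>R fact n else 0)) = (\<lambda>n. if even n then pn n else 0)"
      by (auto simp: pn_def divide_inverse mult.commute)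
    ultimately show ?thesis by (simp add: E_def)
  qed
  have probE: "measure M {\<omega>\<in>space M. even (N \<omega>)} = E"
  proof -
    have "emeasure M {\<omega>\<in>space M. P \<omega> \<in> UNIV \<and> even (N \<omega>)} =
      (\<Sum>n. emeasure M {\<omega>\<in>space M. N \<omega> = n \<and> P \<omega> \<in> UNIV \<and> even n})" by (rule sumlem) simp
    also have "\<dots> = (\<Sum>n. ennreal (if even n then pn n else 0))"
      by (intro suminf_cong) (simp add: em_N)
    also have "\<dots> = ennreal E"
      by (rule suminf_ennreal_eq[OF _ evsums]) (use pn_pos in \<open>auto intro: less_imp_le\<close>)
    finally have "emeasure M {\<omega>\<in>space M. even (N \<omega>)} = ennreal E" by simp
    thus ?thesis using E_pos by (simp add: emeasure_eq_measure)
  qed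
  have intL: "integrable lborel (\<lambda>p. indicator S p *\<^sub>R even_density l c t p) \<and>
      integral\<^sup>L lborel (\<lambda>p. indicator S p *\<^sub>R even_density l c t p) =
        measure M {\<omega>\<in>space M. P \<omega> \<in> S \<and> even (N \<omega>)} / E"
    if S: "S \<in> sets borel" "S \<subseteq> D" for S
  proof (rule nn_integral_eq_integrable[THEN iffD1])
    show "(\<lambda>p. indicator S p *\<^sub>R even_density l c t p) \<in> borel_measurable lborel"
      using S by measurable
    show "AE p in lborel. 0 \<le> indicator S p *\<^sub>R even_density l c t p"
    proof (rule AE_I2)
      fix p show "0 \<le> indicator S p *\<^sub>R even_density l c t p"
        using S ed_nonneg[OF l_pos c_pos t_pos, of p] by (auto simp: indicator_def D_def)
    qed
    show "0 \<le> measure M {\<omega>\<in>space M. P \<omega> \<in> S \<and> even (N \<omega>)} / E" using E_pos by simp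
    have "(\<integral>\<^sup>+ p. ennreal (indicator S p *\<^sub>R even_density l c t p) \<partial>lborel) =
        (\<integral>\<^sup>+ p \<in> S. ennreal (even_density l c t p) \<partial>lborel)"
      by (intro nn_integral_cong) (auto simp: indicator_def)
    also have "\<dots> = ennreal (1/E) * ennreal (measure M {\<omega>\<in>space M. P \<omega> \<in> S \<and> even (N \<omega>)})"
      using intS[OF S] by (simp add: emeasure_eq_measure)
    also have "\<dots> = ennreal (measure M {\<omega>\<in>space M. P \<omega> \<in> S \<and> even (N \<omega>)} / E)"
      using E_pos by (subst ennreal_mult[symmetric]) auto
    finally show "(\<integral>\<^sup>+ p. ennreal (indicator S p *\<^sub>R even_density l c t p) \<partial>lborel) =
        ennreal (measure M {\<omega>\<in>space M. P \<omega> \<in> S \<and> even (N \<omega>)} / E)" .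
  qed
  have measD: "measure M {\<omega>\<in>space M. P \<omega> \<in> D \<and> even (N \<omega>)} = E - pn 0"
  proof -
    have asums: "a sums (E - pn 0)"
    proof -
      have "(\<lambda>n. (if even n then pn n else 0) - (if n = 0 then pn n else 0)) sums (E - pn 0)"
        by (intro sums_diff evsums sums_single)
      moreover have "(\<lambda>n. (if even n then pn n else 0) - (if n = 0 then pn n else 0)) = a"
        by (auto simp: a_def)
      ultimately show ?thesis by simp
    qed
    have "emeasure M {\<omega>\<in>space M. P \<omega> \<in> D \<and> even (N \<omega>)} =
      (\<Sum>n. ennreal (a n) * (\<integral>\<^sup>+ p \<in> D. ennreal (ko_density n c t p) \<partial>lborel))"
      by (rule emS) auto
    also have "\<dots> = (\<Sum>n. ennreal (a n))"
      by (intro suminf_cong) (auto simp: a_def ko_one)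
    also have "\<dots> = ennreal (E - pn 0)"
      by (rule suminf_ennreal_eq[OF a_nn asums])
    finally have "ennreal (measure M {\<omega>\<in>space M. P \<omega> \<in> D \<and> even (N \<omega>)}) = ennreal (E - pn 0)"
      by (simp add: emeasure_eq_measure)
    moreover have "E - pn 0 \<ge> 0"
      using asums a_nn by (metis sums_le sums_zero)
    ultimately show ?thesis by simp
  qed
  have ratio: "(E - pn 0) / E = 1 - 1 / cosh (l * t)"
  proof -
    have gen: "(e*h - e)/(e*h) = 1 - 1/h" if "e > 0" "h > 0" for e h :: real
      using that by (simp add: field_simps)
    have p0: "pn 0 = exp (-l*t)" by (simp add: pn_def)
    show ?thesis unfolding E_def p0 by (rule gen) (auto simp: cosh_real_pos)
  qed
  have measC: "measure M {\<omega>\<in>space M. P \<omega> \<in> C \<and> even (N \<omega>)} = pn 0"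
  proof -
    have "emeasure M {\<omega>\<in>space M. N \<omega> = n \<and> P \<omega> \<in> C \<and> even n} = ennreal (if n = 0 then pn n else 0)" for n
    proof (cases "n = 0")
      case True
      have "emeasure M {\<omega>\<in>space M. N \<omega> = 0} =
          emeasure M ({\<omega>\<in>space M. N \<omega> = 0 \<and> P \<omega> \<in> C} \<union> {\<omega> \<in> space M. N \<omega> = 0 \<and> P \<omega> \<notin> circle c t})"
        by (intro arg_cong[where f="emeasure M"]) (auto simp: C_def)
      also have "\<dots> = emeasure M {\<omega>\<in>space M. N \<omega> = 0 \<and> P \<omega> \<in> C} + emeasure M {\<omega> \<in> space M. N \<omega> = 0 \<and> P \<omega> \<notin> circle c t}"
        by (rule plus_emeasure[symmetric]) (use N_meas P_meas in \<open>auto simp: C_def\<close>)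
      finally show ?thesis using True cond_zero em_N[of 0] by simp
    next
      case False
      show ?thesis
      proof (cases "even n")
        case False thus ?thesis using \<open>n \<noteq> 0\<close> by simp
      next
        case True
        have "emeasure M {\<omega>\<in>space M. N \<omega> = n \<and> P \<omega> \<in> C \<and> even n} =
            emeasure M {\<omega>\<in>space M. N \<omega> = n \<and> P \<omega> \<in> C}" using True by simp
        also have "\<dots> = ennreal (pn n) * (\<integral>\<^sup>+ p \<in> C \<inter> D. ennreal (ko_density n c t p) \<partial>lborel)"
          using cond_dens[of n C] \<open>n \<noteq> 0\<close> em_N[of n] by (simp add: D_def)
        also have "C \<inter> D = {}" using DC by auto
        finally show ?thesis using \<open>n \<noteq> 0\<close> by simp
      qed
    qed
    hence "emeasure M {\<omega>\<in>space M. P \<omega> \<in> C \<and> even (N \<omega>)} = (\<Sum>n. ennreal (if n = 0 then pn n else 0))"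
      using sumlem[of C] by simp
    also have "\<dots> = ennreal (pn 0)"
      by (rule suminf_ennreal_eq[OF _ sums_single]) (use pn_pos in \<open>auto intro: less_imp_le\<close>)
    finally show ?thesis using pn_pos[of 0] by (simp add: emeasure_eq_measure)
  qed
  have pn0: "pn 0 = exp (-l*t)" by (simp add: pn_def)
  show ?thesis
  proof (intro conjI ballI)
    show "set_integrable lborel (open_disk c t) (even_density l c t)"
      unfolding set_integrable_def using intL[of D] by (simp add: D_def)
    show "(LINT p : open_disk c t | lborel. even_density l c t p) = 1 - 1 / cosh (l * t)"
      unfolding set_lebesgue_integral_def using intL[of D] measD ratio
      by (simp add: D_def)
    show "cond_prob M (\<lambda>\<omega>. P \<omega> \<in> circle c t) (\<lambda>\<omega>. even (N \<omega>)) = 1 / cosh (l * t)"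
    proof -
      have gen: "e/(e*h) = 1/h" if "e > 0" for e h :: real
        using that by simp
      show ?thesis unfolding cond_prob_def using measC probE pn0 gen[of "exp (-l*t)" "cosh (l*t)"]
        by (simp add: C_def E_def)
    qed
    fix A :: "(real \<times> real) set" assume A: "A \<in> sets borel"
    show "cond_prob M (\<lambda>\<omega>. P \<omega> \<in> A \<inter> open_disk c t) (\<lambda>\<omega>. even (N \<omega>))
            = (LINT p : A \<inter> open_disk c t | lborel. even_density l c t p)"
      unfolding cond_prob_def set_lebesgue_integral_def using intL[of "A \<inter> D"] A probE
      by (simp add: D_def)
  qed
qed

end
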